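(* Let $q\in\mathbb{C}$ be generic (in particular $q\neq 0$, $q^2\neq 1$), let $\hbar,c\in\mathbb{C}$, and let $A^c_{\hbar,q}$, $K$, $a$, $\tilde c$, $\tilde v$ be as in the context. Then for every natural number $k$, $$K\tilde v^{k}=q\,\beta_k(q)\Big[\frac{q^{2(k+1)}-1}{q^{2}-1}\,\tilde v^k+a(q^2+1)\frac{q^{2k}-1}{q^{2}-1}\,\tilde v^{k-1}-\tilde c\,q^2\,\frac{q^{2(k-1)}-1}{q^{2}-1}\,\tilde v^{k-2}\Big],$$ where $\beta_k(q)=\dfrac{q^{2k}-1}{q^{2k-1}(q^{2}-1)}$ and, by convention, $\tilde v^{-1}=\tilde v^{-2}=0$.
   Context: $U_q(sl(2))$ is the algebra generated by $E_+,E_-,X,Y$ with relations $E_{\pm}X=q^{\pm1}XE_{\pm}$, $E_{\pm}Y=q^{\mp1}YE_{\pm}$, $E_+E_-=E_-E_+=1$, $XY-YX=\frac{E_+^2-E_-^2}{q-q^{-1}}$, with coproduct $\Delta(X)=E_-\otimes X+X\otimes E_+$, $\Delta(Y)=E_-\otimes Y+Y\otimes E_+$, $\Delta(E_\pm)=E_\pm\otimes E_\pm$. The quantum Casimir is $K=\frac{q}{2}(XY+YX)+\frac{q^2(1+q^2)}{2(1-q^2)^2}(E_+^2+E_-^2-2)$. Let $\mathbf V$ be the 3-dimensional $U_q(sl(2))$-module with basis $u,v,w$ and action $E_\pm u=q^{\pm1}u$, $E_\pm v=v$, $E_\pm w=q^{\mp1}w$, $Xu=0$, $Xv=-(q+q^{-1})u$,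 $Xw=v$, $Yu=-v$, $Yv=(q+q^{-1})w$, $Yw=0$. The algebra $A^c_{\hbar,q}$ is the quotient of the tensor algebra $T(\mathbf V)$ by the two-sided ideal generated by $(q^2+1)uw+vv+\frac{q^2+1}{q^2}wu-c$, $q^2uv-vu+\hbar u$, $(q^2+1)(uw-wu)+(1-q^2)vv-\hbar v$, $-q^2vw+wv-\hbar w$ (products are tensor products). $U_q(sl(2))$ acts on $T(\mathbf V)$ and on $A^c_{\hbar,q}$ via the coproduct (i.e. $Z(fg)=\sum Z_{(1)}(f)Z_{(2)}(g)$ for $\Delta Z=\sum Z_{(1)}\otimes Z_{(2)}$), so $K$ acts as a linear operator on $A^c_{\hbar,q}$. Set $a=\hbar(1-q^2)^{-1}$, $\tilde c=c-a^2$, $\tilde v=v-a\in A^c_{\hbar,q}$, and $\tilde v^k$ denotes the $k$-th power of $\tilde v$ in $A^c_{\hbar,q}$ ($\tilde v^0=1$). *)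

theory Defs
  imports Complex_Main
begin

text \<open>The tensor algebra T(V) over the complex numbers on the basis u, v, w is modelled
  as functions from words (lists of generators) to coefficients; genuine elements of
  T(V) are those with finite support.  Multiplication is the tensor (concatenation)
  product.\<close>

datatype gen = gU | gV | gW

type_synonym tens = "gen list \<Rightarrow> complex"

definition wd :: "gen list \<Rightarrow> tens" where
  "wd x = (\<lambda>y. if y = x then 1 else 0)"

definition tzero :: tens where "tzero = (\<lambda>_. 0)"
definition tone :: tens where "tone = wd []"
definition tadd :: "tens \<Rightarrow> tens \<Rightarrow> tens" where "tadd f g = (\<lambda>z. f z + g z)"
definition tsub :: "tens \<Rightarrow> tens \<Rightarrow> tens" where "tsub f g = (\<lambda>z. f z - g z)"
definition tsmul :: "complex \<Rightarrow> tens \<Rightarrow> tens" where "tsmul s f = (\<lambda>z. s * f z)"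

definition tmul :: "tens \<Rightarrow> tens \<Rightarrow> tens" where
  "tmul f g = (\<lambda>z. \<Sum>i\<le>length z. f (take i z) * g (drop i z))"

primrec tpow :: "tens \<Rightarrow> nat \<Rightarrow> tens" where
  "tpow f 0 = tone"
| "tpow f (Suc n) = tmul f (tpow f n)"

definition gu :: tens where "gu = wd [gU]"
definition gv :: tens where "gv = wd [gV]"
definition gw :: tens where "gw = wd [gW]"

text \<open>Action of the generators of U_q(sl(2)) on the module V.\<close>
fun Ep1 :: "complex \<Rightarrow> gen \<Rightarrow> tens" where
  "Ep1 q gU = tsmul q gu" | "Ep1 q gV = gv" | "Ep1 q gW = tsmul (inverse q) gw"
fun Em1 :: "complex \<Rightarrow> gen \<Rightarrow> tens" where
  "Em1 q gU = tsmul (inverse q) gu" | "Em1 q gV = gv" | "Em1 q gW = tsmul q gw"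
fun X1 :: "complex \<Rightarrow> gen \<Rightarrow> tens" where
  "X1 q gU = tzero" | "X1 q gV = tsmul (- (q + inverse q)) gu" | "X1 q gW = gv"
fun Y1 :: "complex \<Rightarrow> gen \<Rightarrow> tens" where
  "Y1 q gU = tsmul (-1) gv" | "Y1 q gV = tsmul (q + inverse q) gw" | "Y1 q gW = tzero"

text \<open>Action on basis words via the coproduct:
  Delta(E) = E (x) E, Delta(X) = E_- (x) X + X (x) E_+, Delta(Y) = E_- (x) Y + Y (x) E_+,
  with Z(f g) = sum Z_(1)(f) Z_(2)(g); here f is the first letter and g the rest.\<close>
primrec EpW :: "complex \<Rightarrow> gen list \<Rightarrow> tens" where
  "EpW q [] = tone"
| "EpW q (x # w) = tmul (Ep1 q x) (EpW q w)"

primrec EmW :: "complex \<Rightarrow> gen list \<Rightarrow> tens" where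
  "EmW q [] = tone"
| "EmW q (x # w) = tmul (Em1 q x) (EmW q w)"

primrec XW :: "complex \<Rightarrow> gen list \<Rightarrow> tens" where
  "XW q [] = tzero"
| "XW q (x # w) = tadd (tmul (Em1 q x) (XW q w)) (tmul (X1 q x) (EpW q w))"

primrec YW :: "complex \<Rightarrow> gen list \<Rightarrow> tens" where
  "YW q [] = tzero"
| "YW q (x # w) = tadd (tmul (Em1 q x) (YW q w)) (tmul (Y1 q x) (EpW q w))"

definition lin :: "(gen list \<Rightarrow> tens) \<Rightarrow> tens \<Rightarrow> tens" where
  "lin M f = (\<lambda>z. \<Sum>y\<in>{y. f y \<noteq> 0}. f y * M y z)"

definition Ep :: "complex \<Rightarrow> tens \<Rightarrow> tens" where "Ep q = lin (EpW q)"
definition Em :: "complex \<Rightarrow> tens \<Rightarrow> tens" where "Em q = lin (EmW q)"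
definition Xop :: "complex \<Rightarrow> tens \<Rightarrow> tens" where "Xop q = lin (XW q)"
definition Yop :: "complex \<Rightarrow> tens \<Rightarrow> tens" where "Yop q = lin (YW q)"

definition Kop :: "complex \<Rightarrow> tens \<Rightarrow> tens" where
  "Kop q f = tadd
     (tsmul (q / 2) (tadd (Xop q (Yop q f)) (Yop q (Xop q f))))
     (tsmul (q^2 * (1 + q^2) / (2 * (1 - q^2)^2))
        (tsub (tadd (Ep q (Ep q f)) (Em q (Em q f))) (tsmul 2 f)))"

definition rels :: "complex \<Rightarrow> complex \<Rightarrow> complex \<Rightarrow> tens set" where
  "rels q h c = {
     tsub (tadd (tadd (tsmul (q^2 + 1) (tmul gu gw)) (tmul gv gv))
                (tsmul ((q^2 + 1) / q^2) (tmul gw gu))) (tsmul c tone),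
     tadd (tsub (tsmul (q^2) (tmul gu gv)) (tmul gv gu)) (tsmul h gu),
     tsub (tadd (tsmul (q^2 + 1) (tsub (tmul gu gw) (tmul gw gu))) (tsmul (1 - q^2) (tmul gv gv)))
          (tsmul h gv),
     tsub (tadd (tsmul (- (q^2)) (tmul gv gw)) (tmul gw gv)) (tsmul h gw) }"

text \<open>The two-sided ideal of T(V) generated by the relations: all finite linear
  combinations of terms (word) * relation * (word).\<close>
inductive_set relideal :: "complex \<Rightarrow> complex \<Rightarrow> complex \<Rightarrow> tens set"
  for q h c where
  zero: "tzero \<in> relideal q h c"
| step: "x \<in> relideal q h c \<Longrightarrow> r \<in> rels q h c \<Longrightarrow>
           tadd x (tsmul s (tmul (tmul (wd l) r) (wd m))) \<in> relideal q h c"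

text \<open>Equality in the quotient algebra A^c_{hbar,q} = T(V)/I.\<close>
definition eqA :: "complex \<Rightarrow> complex \<Rightarrow> complex \<Rightarrow> tens \<Rightarrow> tens \<Rightarrow> bool" where
  "eqA q h c f g \<longleftrightarrow> tsub f g \<in> relideal q h c"

definition tpowm :: "tens \<Rightarrow> nat \<Rightarrow> nat \<Rightarrow> tens" where
  "tpowm f k j = (if j \<le> k then tpow f (k - j) else tzero)"

definition betaq :: "nat \<Rightarrow> complex \<Rightarrow> complex" where
  "betaq k q = (q^(2*k) - 1) / (q powi (2 * int k - 1) * (q^2 - 1))"

end

theory Submission
  imports Defs
begin


definition splits :: "gen list \<Rightarrow> (gen list \<times> gen list) set" where
  "splits z = {(x,y). x @ y = z}"

lemma splits_img: "splits z = (\<lambda>i. (take i z, drop i z)) ` {..length z}"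
  unfolding splits_def
proof safe
  fix x y assume "z = x @ y"
  then show "(x, y) \<in> (\<lambda>i. (take i (x@y), drop i (x@y))) ` {..length (x@y)}"
    by (intro image_eqI[of _ _ "length x"]) auto
qed auto

lemma finite_splits[simp]: "finite (splits z)"
  unfolding splits_img by simp

lemma tmul_split: "tmul f g z = (\<Sum>(x,y)\<in>splits z. f x * g y)"
proof -
  have inj: "inj_on (\<lambda>i. (take i z, drop i z)) {..length z}"
    by (rule inj_onI) (metis (no_types, lifting) Pair_inject atMost_iff length_take min.absorb2)
  show ?thesis unfolding tmul_def splits_img
    by (subst sum.reindex[OF inj]) simp
qed

lemma tmul_assoc: "tmul (tmul f g) h = tmul f (tmul g h)"
proof
  fix z
  have "tmul (tmul f g) h z = (\<Sum>pw\<in>splits z. \<Sum>xy\<in>splits (fst pw). f (fst xy) * g (snd xy) * h (snd pw))"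
    by (simp add: tmul_split sum_distrib_right case_prod_beta)
  also have "\<dots> = (\<Sum>t\<in>Sigma (splits z) (\<lambda>pw. splits (fst pw)). f (fst (snd t)) * g (snd (snd t)) * h (snd (fst t)))"
    by (subst sum.Sigma) (auto simp: case_prod_beta)
  also have "\<dots> = (\<Sum>t\<in>Sigma (splits z) (\<lambda>xr. splits (snd xr)). f (fst (fst t)) * g (fst (snd t)) * h (snd (snd t)))"
    by (rule sum.reindex_bij_witness[where i="\<lambda>((x,r),(y,w)). ((x@y,w),(x,y))"
         and j="\<lambda>((p,w),(x,y)). ((x,y@w),(y,w))"]) (auto simp: splits_def)
  also have "\<dots> = (\<Sum>xr\<in>splits z. \<Sum>yw\<in>splits (snd xr). f (fst xr) * g (fst yw) * h (snd yw))"
    by (subst sum.Sigma) (auto simp: case_prod_beta)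
  also have "\<dots> = tmul f (tmul g h) z"
    by (simp add: tmul_split sum_distrib_left case_prod_beta mult.assoc)
  finally show "tmul (tmul f g) h z = tmul f (tmul g h) z" .
qed


lemma tmul_tadd_l: "tmul (tadd f g) h = tadd (tmul f h) (tmul g h)"
  by (rule ext) (simp add: tmul_def tadd_def sum.distrib distrib_right)
lemma tmul_tadd_r: "tmul h (tadd f g) = tadd (tmul h f) (tmul h g)"
  by (rule ext) (simp add: tmul_def tadd_def sum.distrib distrib_left)
lemma tmul_tsub_l: "tmul (tsub f g) h = tsub (tmul f h) (tmul g h)"
  by (rule ext) (simp add: tmul_def tsub_def sum_subtractf left_diff_distrib)
lemma tmul_tsub_r: "tmul h (tsub f g) = tsub (tmul h f) (tmul h g)"
  by (rule ext) (simp add: tmul_def tsub_def sum_subtractf right_diff_distrib)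
lemma tmul_tsmul_l: "tmul (tsmul s f) h = tsmul s (tmul f h)"
  by (rule ext) (simp add: tmul_def tsmul_def sum_distrib_left mult.assoc)
lemma tmul_tsmul_r: "tmul h (tsmul s f) = tsmul s (tmul h f)"
  by (rule ext) (simp add: tmul_def tsmul_def sum_distrib_left mult.assoc mult.left_commute)
lemma tmul_tzero_l[simp]: "tmul tzero f = tzero"
  by (rule ext) (simp add: tmul_def tzero_def)
lemma tmul_tzero_r[simp]: "tmul f tzero = tzero"
  by (rule ext) (simp add: tmul_def tzero_def)

lemma tmul_wd_l: "tmul (wd x) f = (\<lambda>z. if take (length x) z = x then f (drop (length x) z) else 0)"
proof
  fix z
  have "tmul (wd x) f z = (\<Sum>p\<in>splits z. wd x (fst p) * f (snd p))"
    by (simp add: tmul_split case_prod_beta)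
  also have "\<dots> = (\<Sum>p\<in>splits z \<inter> {p. fst p = x}. f (snd p))"
    by (rule sum.mono_neutral_cong_right) (auto simp: wd_def)
  also have "\<dots> = (if take (length x) z = x then f (drop (length x) z) else 0)"
  proof (cases "take (length x) z = x")
    case True
    then have "splits z \<inter> {p. fst p = x} = {(x, drop (length x) z)}"
      by (auto simp: splits_def) (metis append_take_drop_id)
    then show ?thesis using True by simp
  next
    case False
    then have "splits z \<inter> {p. fst p = x} = {}"
      by (auto simp: splits_def)
    then show ?thesis using False by simp
  qed
  finally show "tmul (wd x) f z = (if take (length x) z = x then f (drop (length x) z) else 0)" .
qed

lemma tmul_wd_wd: "tmul (wd x) (wd y) = wd (x @ y)"
  unfolding tmul_wd_l by (rule ext) (auto simp: wd_def, metis append_take_drop_id)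

lemma tmul_tone_l[simp]: "tmul tone f = f"
  by (rule ext) (simp add: tone_def tmul_wd_l)

lemma tmul_tone_r[simp]: "tmul f tone = f"
proof
  fix z
  have "tmul f tone z = (\<Sum>p\<in>splits z. f (fst p) * tone (snd p))"
    by (simp add: tmul_split case_prod_beta)
  also have "\<dots> = (\<Sum>p\<in>{(z,[])}. f (fst p) * tone (snd p))"
    by (rule sum.mono_neutral_right[OF finite_splits]) (auto simp: splits_def tone_def wd_def)
  finally show "tmul f tone z = f z" by (simp add: tone_def wd_def)
qed

definition fs :: "tens \<Rightarrow> bool" where "fs f \<longleftrightarrow> finite {y. f y \<noteq> 0}"

lemma fs_wd[simp]: "fs (wd x)" unfolding fs_def wd_def by simp
lemma fs_tone[simp]: "fs tone" unfolding tone_def by simp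
lemma fs_tzero[simp]: "fs tzero" unfolding fs_def tzero_def by simp
lemma fs_tadd[simp]: "fs f \<Longrightarrow> fs g \<Longrightarrow> fs (tadd f g)"
  unfolding fs_def tadd_def by (rule finite_subset[of _ "{y. f y \<noteq> 0} \<union> {y. g y \<noteq> 0}"]) auto
lemma fs_tsub[simp]: "fs f \<Longrightarrow> fs g \<Longrightarrow> fs (tsub f g)"
  unfolding fs_def tsub_def by (rule finite_subset[of _ "{y. f y \<noteq> 0} \<union> {y. g y \<noteq> 0}"]) auto
lemma fs_tsmul[simp]: "fs f \<Longrightarrow> fs (tsmul s f)"
  unfolding fs_def tsmul_def by (rule finite_subset[of _ "{y. f y \<noteq> 0}"]) auto
lemma fs_gens[simp]: "fs gu" "fs gv" "fs gw"
  unfolding gu_def gv_def gw_def by simp_all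

lemma supp_tmul: "{z. tmul f g z \<noteq> 0} \<subseteq> (\<lambda>p. fst p @ snd p) ` ({y. f y \<noteq> 0} \<times> {y. g y \<noteq> 0})"
proof
  fix z assume "z \<in> {z. tmul f g z \<noteq> 0}"
  then have "(\<Sum>p\<in>splits z. f (fst p) * g (snd p)) \<noteq> 0" by (simp add: tmul_split case_prod_beta)
  then obtain p where "p \<in> splits z" "f (fst p) * g (snd p) \<noteq> 0" by (meson sum.neutral)
  then show "z \<in> (\<lambda>p. fst p @ snd p) ` ({y. f y \<noteq> 0} \<times> {y. g y \<noteq> 0})"
    by (auto simp: splits_def intro!: image_eqI[of _ _ p])
qed

lemma fs_tmul[simp]: "fs f \<Longrightarrow> fs g \<Longrightarrow> fs (tmul f g)"
  unfolding fs_def by (rule finite_subset[OF supp_tmul]) auto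

lemma fs_tpow[simp]: "fs f \<Longrightarrow> fs (tpow f n)"
  by (induction n) auto

lemma fs_Ep1[simp]: "fs (Ep1 q x)" "fs (Em1 q x)" "fs (X1 q x)" "fs (Y1 q x)"
  by (cases x; simp)+

lemma fs_W[simp]: "fs (EpW q w)" "fs (EmW q w)" "fs (XW q w)" "fs (YW q w)"
  by (induction w) auto

lemma lin_eq: "finite S \<Longrightarrow> {y. f y \<noteq> 0} \<subseteq> S \<Longrightarrow> lin M f z = (\<Sum>y\<in>S. f y * M y z)"
  unfolding lin_def by (rule sum.mono_neutral_left) auto

lemma fs_lin[simp]: assumes "fs f" "\<And>y. fs (M y)" shows "fs (lin M f)"
proof -
  have "{z. lin M f z \<noteq> 0} \<subseteq> (\<Union>y\<in>{y. f y \<noteq> 0}. {z. M y z \<noteq> 0})"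
  proof
    fix z assume "z \<in> {z. lin M f z \<noteq> 0}"
    then obtain y where "f y \<noteq> 0" "M y z \<noteq> 0" unfolding lin_def by (metis (mono_tags, lifting) mem_Collect_eq mult_zero_right sum.neutral)
    then show "z \<in> (\<Union>y\<in>{y. f y \<noteq> 0}. {z. M y z \<noteq> 0})" by auto
  qed
  moreover have "finite (\<Union>y\<in>{y. f y \<noteq> 0}. {z. M y z \<noteq> 0})"
    using assms unfolding fs_def by auto
  ultimately show ?thesis unfolding fs_def by (rule finite_subset)
qed

lemma lin_tadd: assumes "fs f" "fs g" shows "lin M (tadd f g) = tadd (lin M f) (lin M g)"
proof
  fix z
  let ?S = "{y. f y \<noteq> 0} \<union> {y. g y \<noteq> 0}"
  have fin: "finite ?S" using assms by (simp add: fs_def)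
  have 1: "lin M (tadd f g) z = (\<Sum>y\<in>?S. tadd f g y * M y z)" by (rule lin_eq[OF fin]) (auto simp: tadd_def)
  have 2: "lin M f z = (\<Sum>y\<in>?S. f y * M y z)" by (rule lin_eq[OF fin]) auto
  have 3: "lin M g z = (\<Sum>y\<in>?S. g y * M y z)" by (rule lin_eq[OF fin]) auto
  show "lin M (tadd f g) z = tadd (lin M f) (lin M g) z"
    unfolding 1 by (simp add: 2 3 tadd_def sum.distrib distrib_right)
qed

lemma lin_tsub: assumes "fs f" "fs g" shows "lin M (tsub f g) = tsub (lin M f) (lin M g)"
proof
  fix z
  let ?S = "{y. f y \<noteq> 0} \<union> {y. g y \<noteq> 0}"
  have fin: "finite ?S" using assms by (simp add: fs_def)
  have 1: "lin M (tsub f g) z = (\<Sum>y\<in>?S. tsub f g y * M y z)" by (rule lin_eq[OF fin]) (auto simp: tsub_def)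
  have 2: "lin M f z = (\<Sum>y\<in>?S. f y * M y z)" by (rule lin_eq[OF fin]) auto
  have 3: "lin M g z = (\<Sum>y\<in>?S. g y * M y z)" by (rule lin_eq[OF fin]) auto
  show "lin M (tsub f g) z = tsub (lin M f) (lin M g) z"
    unfolding 1 by (simp add: 2 3 tsub_def sum_subtractf left_diff_distrib)
qed

lemma lin_tsmul: assumes "fs f" shows "lin M (tsmul s f) = tsmul s (lin M f)"
proof
  fix z
  let ?S = "{y. f y \<noteq> 0}"
  have fin: "finite ?S" using assms by (simp add: fs_def)
  have 1: "lin M (tsmul s f) z = (\<Sum>y\<in>?S. tsmul s f y * M y z)" by (rule lin_eq[OF fin]) (auto simp: tsmul_def)
  have 2: "lin M f z = (\<Sum>y\<in>?S. f y * M y z)" by (rule lin_eq[OF fin]) auto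
  show "lin M (tsmul s f) z = tsmul s (lin M f) z"
    unfolding 1 by (simp add: 2 tsmul_def sum_distrib_left mult.assoc)
qed

lemma lin_wd[simp]: "lin M (wd x) = M x"
  by (rule ext) (subst lin_eq[of "{x}"], auto simp: wd_def)

lemma lin_tone[simp]: "lin M tone = M []" by (simp add: tone_def)
lemma lin_tzero[simp]: "lin M tzero = tzero"
  by (rule ext) (simp add: lin_def tzero_def)

lemma lin_tmul:
  assumes "fs f" "fs g"
  shows "lin M (tmul f g) z = (\<Sum>x\<in>{y. f y \<noteq> 0}. \<Sum>y\<in>{y. g y \<noteq> 0}. f x * g y * M (x @ y) z)"
proof -
  let ?A = "{y. f y \<noteq> 0}" and ?B = "{y. g y \<noteq> 0}"
  let ?T = "(\<lambda>p. fst p @ snd p) ` (?A \<times> ?B)"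
  have fA: "finite ?A" and fB: "finite ?B" using assms by (auto simp: fs_def)
  have fT: "finite ?T" using fA fB by simp
  have "lin M (tmul f g) z = (\<Sum>w\<in>?T. tmul f g w * M w z)"
    by (rule lin_eq[OF fT supp_tmul])
  also have "\<dots> = (\<Sum>w\<in>?T. \<Sum>p\<in>{p\<in>?A \<times> ?B. fst p @ snd p = w}. f (fst p) * g (snd p) * M (fst p @ snd p) z)"
  proof (rule sum.cong[OF refl])
    fix w
    have "tmul f g w = (\<Sum>p\<in>splits w. f (fst p) * g (snd p))" by (simp add: tmul_split case_prod_beta)
    also have "\<dots> = (\<Sum>p\<in>{p\<in>?A \<times> ?B. fst p @ snd p = w}. f (fst p) * g (snd p))"
      by (rule sum.mono_neutral_right[OF finite_splits]) (auto simp: splits_def)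
    finally show "tmul f g w * M w z = (\<Sum>p\<in>{p\<in>?A \<times> ?B. fst p @ snd p = w}. f (fst p) * g (snd p) * M (fst p @ snd p) z)"
      by (simp add: sum_distrib_right)
  qed
  also have "\<dots> = (\<Sum>p\<in>?A \<times> ?B. f (fst p) * g (snd p) * M (fst p @ snd p) z)"
    by (rule sum.group) (use fA fB in auto)
  also have "\<dots> = (\<Sum>x\<in>?A. \<Sum>y\<in>?B. f x * g y * M (x @ y) z)"
    by (simp add: sum.cartesian_product case_prod_beta)
  finally show ?thesis .
qed

lemma tmul_lin:
  assumes "fs f" "fs g"
  shows "tmul (lin M f) (lin N g) z = (\<Sum>x\<in>{y. f y \<noteq> 0}. \<Sum>y\<in>{y. g y \<noteq> 0}. f x * g y * tmul (M x) (N y) z)"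
proof -
  let ?A = "{y. f y \<noteq> 0}" and ?B = "{y. g y \<noteq> 0}"
  have fA: "finite ?A" and fB: "finite ?B" using assms by (auto simp: fs_def)
  have "tmul (lin M f) (lin N g) z = (\<Sum>i\<le>length z. (\<Sum>x\<in>?A. f x * M x (take i z)) * (\<Sum>y\<in>?B. g y * N y (drop i z)))"
    unfolding tmul_def by (simp add: lin_eq[OF fA] lin_eq[OF fB])
  also have "\<dots> = (\<Sum>i\<le>length z. \<Sum>x\<in>?A. \<Sum>y\<in>?B. f x * g y * (M x (take i z) * N y (drop i z)))"
    by (simp add: sum_product mult_ac)
  also have "\<dots> = (\<Sum>x\<in>?A. \<Sum>y\<in>?B. \<Sum>i\<le>length z. f x * g y * (M x (take i z) * N y (drop i z)))"
    by (subst sum.swap) (simp add: sum.swap[of _ "{..length z}"])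
  also have "\<dots> = (\<Sum>x\<in>?A. \<Sum>y\<in>?B. f x * g y * tmul (M x) (N y) z)"
    by (simp add: tmul_def sum_distrib_left)
  finally show ?thesis .
qed

lemma lin_mult2:
  assumes "fs f" "fs g" "\<And>x y. M (x @ y) = tadd (tmul (A x) (B y)) (tmul (C x) (D y))"
  shows "lin M (tmul f g) = tadd (tmul (lin A f) (lin B g)) (tmul (lin C f) (lin D g))"
  by (rule ext) (simp add: lin_tmul[OF assms(1,2)] tmul_lin[OF assms(1,2)] assms(3) tadd_def
       distrib_left sum.distrib)

lemma lin_mult1:
  assumes "fs f" "fs g" "\<And>x y. M (x @ y) = tmul (A x) (B y)"
  shows "lin M (tmul f g) = tmul (lin A f) (lin B g)"
  by (rule ext) (simp add: lin_tmul[OF assms(1,2)] tmul_lin[OF assms(1,2)] assms(3))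


lemma tadd_tzero[simp]: "tadd f tzero = f" "tadd tzero f = f"
  by (auto simp: tadd_def tzero_def)
lemma tadd_assoc: "tadd (tadd f g) h = tadd f (tadd g h)"
  by (auto simp: tadd_def add.assoc)
lemma tadd_comm: "tadd f g = tadd g f"
  by (auto simp: tadd_def add.commute)

lemma EpW_append: "EpW q (x @ y) = tmul (EpW q x) (EpW q y)"
  by (induction x) (auto simp: tone_def[symmetric] tmul_assoc)
lemma EmW_append: "EmW q (x @ y) = tmul (EmW q x) (EmW q y)"
  by (induction x) (auto simp: tmul_assoc)
lemma XW_append: "XW q (x @ y) = tadd (tmul (EmW q x) (XW q y)) (tmul (XW q x) (EpW q y))"
  by (induction x) (auto simp: tmul_assoc tmul_tadd_l tmul_tadd_r EpW_append tadd_assoc)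
lemma YW_append: "YW q (x @ y) = tadd (tmul (EmW q x) (YW q y)) (tmul (YW q x) (EpW q y))"
  by (induction x) (auto simp: tmul_assoc tmul_tadd_l tmul_tadd_r EpW_append tadd_assoc)

lemma fs_ops[simp]: "fs f \<Longrightarrow> fs (Ep q f)" "fs f \<Longrightarrow> fs (Em q f)" "fs f \<Longrightarrow> fs (Xop q f)" "fs f \<Longrightarrow> fs (Yop q f)"
  by (auto simp: Ep_def Em_def Xop_def Yop_def)

lemma Ep_mul: "fs f \<Longrightarrow> fs g \<Longrightarrow> Ep q (tmul f g) = tmul (Ep q f) (Ep q g)"
  unfolding Ep_def by (rule lin_mult1) (auto simp: EpW_append)
lemma Em_mul: "fs f \<Longrightarrow> fs g \<Longrightarrow> Em q (tmul f g) = tmul (Em q f) (Em q g)"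
  unfolding Em_def by (rule lin_mult1) (auto simp: EmW_append)
lemma X_mul: "fs f \<Longrightarrow> fs g \<Longrightarrow> Xop q (tmul f g) = tadd (tmul (Em q f) (Xop q g)) (tmul (Xop q f) (Ep q g))"
  unfolding Xop_def Em_def Ep_def by (rule lin_mult2) (auto simp: XW_append)
lemma Y_mul: "fs f \<Longrightarrow> fs g \<Longrightarrow> Yop q (tmul f g) = tadd (tmul (Em q f) (Yop q g)) (tmul (Yop q f) (Ep q g))"
  unfolding Yop_def Em_def Ep_def by (rule lin_mult2) (auto simp: YW_append)

lemma ops_lin:
  "fs f \<Longrightarrow> fs g \<Longrightarrow> Ep q (tadd f g) = tadd (Ep q f) (Ep q g)"
  "fs f \<Longrightarrow> fs g \<Longrightarrow> Em q (tadd f g) = tadd (Em q f) (Em q g)"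
  "fs f \<Longrightarrow> fs g \<Longrightarrow> Xop q (tadd f g) = tadd (Xop q f) (Xop q g)"
  "fs f \<Longrightarrow> fs g \<Longrightarrow> Yop q (tadd f g) = tadd (Yop q f) (Yop q g)"
  "fs f \<Longrightarrow> fs g \<Longrightarrow> Ep q (tsub f g) = tsub (Ep q f) (Ep q g)"
  "fs f \<Longrightarrow> fs g \<Longrightarrow> Em q (tsub f g) = tsub (Em q f) (Em q g)"
  "fs f \<Longrightarrow> fs g \<Longrightarrow> Xop q (tsub f g) = tsub (Xop q f) (Xop q g)"
  "fs f \<Longrightarrow> fs g \<Longrightarrow> Yop q (tsub f g) = tsub (Yop q f) (Yop q g)"
  "fs f \<Longrightarrow> Ep q (tsmul s f) = tsmul s (Ep q f)"
  "fs f \<Longrightarrow> Em q (tsmul s f) = tsmul s (Em q f)"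
  "fs f \<Longrightarrow> Xop q (tsmul s f) = tsmul s (Xop q f)"
  "fs f \<Longrightarrow> Yop q (tsmul s f) = tsmul s (Yop q f)"
  by (simp_all add: Ep_def Em_def Xop_def Yop_def lin_tadd lin_tsub lin_tsmul)

lemma ops_gen:
  "Ep q tone = tone" "Em q tone = tone" "Xop q tone = tzero" "Yop q tone = tzero"
  "Ep q gu = tsmul q gu" "Ep q gv = gv" "Ep q gw = tsmul (inverse q) gw"
  "Em q gu = tsmul (inverse q) gu" "Em q gv = gv" "Em q gw = tsmul q gw"
  "Xop q gu = tzero" "Xop q gv = tsmul (- (q + inverse q)) gu" "Xop q gw = gv"
  "Yop q gu = tsmul (-1) gv" "Yop q gv = tsmul (q + inverse q) gw" "Yop q gw = tzero"
  by (simp_all add: Ep_def Em_def Xop_def Yop_def gu_def gv_def gw_def tone_def[symmetric])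

lemma I_tadd: assumes "x \<in> relideal q h c" "y \<in> relideal q h c" shows "tadd x y \<in> relideal q h c"
  using assms(2)
proof (induction y rule: relideal.induct)
  case zero then show ?case using assms(1) by simp
next
  case (step y r s l m)
  then show ?case using relideal.step[OF step.IH step.hyps(2)] by (simp add: tadd_assoc)
qed

lemma I_tsmul: assumes "x \<in> relideal q h c" shows "tsmul t x \<in> relideal q h c"
  using assms
proof (induction x rule: relideal.induct)
  case zero then show ?case using relideal.zero by (simp add: tsmul_def tzero_def)
next
  case (step y r s l m)
  have "tsmul t (tadd y (tsmul s (tmul (tmul (wd l) r) (wd m)))) =
        tadd (tsmul t y) (tsmul (t*s) (tmul (tmul (wd l) r) (wd m)))"
    by (auto simp: tsmul_def tadd_def algebra_simps)
  then show ?case using relideal.step[OF step.IH step.hyps(2)] by simp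
qed

lemma I_gen: "r \<in> rels q h c \<Longrightarrow> tmul (tmul (wd l) r) (wd m) \<in> relideal q h c"
  using relideal.step[OF relideal.zero, where r=r and s=1 and l=l and m=m] by (simp add: tsmul_def)

lemma fs_induct_aux:
  assumes "finite S" "P tzero" "\<And>g y s. P g \<Longrightarrow> P (tadd g (tsmul s (wd y)))"
  shows "\<forall>g. {y. g y \<noteq> 0} \<subseteq> S \<longrightarrow> P g"
  using assms(1)
proof (induction S rule: finite_induct)
  case empty
  then show ?case using assms(2) by (auto simp: tzero_def fun_eq_iff)
next
  case (insert y S)
  show ?case
  proof (intro allI impI)
    fix g :: tens assume sub: "{y. g y \<noteq> 0} \<subseteq> insert y S"
    have "{z. (g(y:=0)) z \<noteq> 0} \<subseteq> S" using sub by auto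
    then have "P (g(y:=0))" using insert.IH by blast
    then have "P (tadd (g(y:=0)) (tsmul (g y) (wd y)))" by (rule assms(3))
    moreover have "tadd (g(y:=0)) (tsmul (g y) (wd y)) = g"
      by (auto simp: tadd_def tsmul_def wd_def fun_eq_iff)
    ultimately show "P g" by simp
  qed
qed

lemma fs_induct[consumes 1, case_names zero add]:
  assumes "fs g" "P tzero" "\<And>g y s. P g \<Longrightarrow> P (tadd g (tsmul s (wd y)))"
  shows "P g"
  using fs_induct_aux[of "{y. g y \<noteq> 0}" P] assms by (auto simp: fs_def)

lemma I_lmul: assumes "fs g" "x \<in> relideal q h c" shows "tmul g x \<in> relideal q h c"
  using assms(2)
proof (induction x rule: relideal.induct)
  case zero then show ?case by (simp add: relideal.zero)
next
  case (step y r s l m)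
  have "tmul g (tmul (tmul (wd l) r) (wd m)) \<in> relideal q h c"
    using assms(1)
  proof (induction g rule: fs_induct)
    case zero then show ?case by (simp add: relideal.zero)
  next
    case (add g y s)
    have "tmul (wd y) (tmul (tmul (wd l) r) (wd m)) = tmul (tmul (wd (y@l)) r) (wd m)"
      by (simp add: tmul_assoc tmul_wd_wd[symmetric])
    then show ?case using add I_gen[OF step.hyps(2)]
      by (auto simp: tmul_tadd_l tmul_tsmul_l intro!: I_tadd I_tsmul)
  qed
  then show ?case using step.IH
    by (auto simp: tmul_tadd_r tmul_tsmul_r intro!: I_tadd I_tsmul)
qed

lemma I_rmul: assumes "fs g" "x \<in> relideal q h c" shows "tmul x g \<in> relideal q h c"
  using assms(2)
proof (induction x rule: relideal.induct)
  case zero then show ?case by (simp add: relideal.zero)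
next
  case (step y r s l m)
  have "tmul (tmul (tmul (wd l) r) (wd m)) g \<in> relideal q h c"
    using assms(1)
  proof (induction g rule: fs_induct)
    case zero then show ?case by (simp add: relideal.zero)
  next
    case (add g y s)
    have "tmul (tmul (tmul (wd l) r) (wd m)) (wd y) = tmul (tmul (wd l) r) (wd (m@y))"
      by (simp add: tmul_assoc tmul_wd_wd[symmetric])
    then show ?case using add I_gen[OF step.hyps(2)]
      by (auto simp: tmul_tadd_r tmul_tsmul_r intro!: I_tadd I_tsmul)
  qed
  then show ?case using step.IH
    by (auto simp: tmul_tadd_l tmul_tsmul_l intro!: I_tadd I_tsmul)
qed

lemma I_rel: "r \<in> rels q h c \<Longrightarrow> r \<in> relideal q h c"
  using I_gen[of r q h c "[]" "[]"] by (simp add: tone_def[symmetric])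

lemma eqA_eq: "f = g \<Longrightarrow> eqA q h c f g"
  unfolding eqA_def using relideal.zero by (simp add: tsub_def tzero_def)
lemma eqA_sym: "eqA q h c f g \<Longrightarrow> eqA q h c g f"
  unfolding eqA_def using I_tsmul[of "tsub f g" q h c "-1"]
  by (simp add: tsub_def tsmul_def)
lemma eqA_trans: "eqA q h c f g \<Longrightarrow> eqA q h c g k \<Longrightarrow> eqA q h c f k"
  unfolding eqA_def using I_tadd[of "tsub f g" q h c "tsub g k"]
  by (simp add: tsub_def tadd_def)
lemma eqA_tadd: "eqA q h c f g \<Longrightarrow> eqA q h c f' g' \<Longrightarrow> eqA q h c (tadd f f') (tadd g g')"
  unfolding eqA_def using I_tadd[of "tsub f g" q h c "tsub f' g'"]
  by (simp add: tsub_def tadd_def algebra_simps)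
lemma eqA_tsmul: "eqA q h c f g \<Longrightarrow> eqA q h c (tsmul s f) (tsmul s g)"
  unfolding eqA_def using I_tsmul[of "tsub f g" q h c s]
  by (simp add: tsub_def tsmul_def algebra_simps)
lemma eqA_lmul: "fs k \<Longrightarrow> eqA q h c f g \<Longrightarrow> eqA q h c (tmul k f) (tmul k g)"
  unfolding eqA_def using I_lmul[of k "tsub f g" q h c] by (simp add: tmul_tsub_r)
lemma eqA_rmul: "fs k \<Longrightarrow> eqA q h c f g \<Longrightarrow> eqA q h c (tmul f k) (tmul g k)"
  unfolding eqA_def using I_rmul[of k "tsub f g" q h c] by (simp add: tmul_tsub_l)



lemma tsub_tzero[simp]: "tsub f tzero = f" by (simp add: tsub_def tzero_def)
lemma tsmul_tzero[simp]: "tsmul s tzero = tzero" by (simp add: tsmul_def tzero_def)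

lemmas tsimps = tmul_tadd_l tmul_tadd_r tmul_tsub_l tmul_tsub_r tmul_tsmul_l tmul_tsmul_r tmul_assoc

definition VV :: "complex \<Rightarrow> tens" where "VV a = tsub gv (tsmul a tone)"
abbreviation PP where "PP a k \<equiv> tpow (VV a) k"

lemma fs_VV[simp]: "fs (VV a)" by (simp add: VV_def)

lemma VV_ops: "Ep q (VV a) = VV a" "Em q (VV a) = VV a"
  "Xop q (VV a) = tsmul (- (q + inverse q)) gu" "Yop q (VV a) = tsmul (q + inverse q) gw"
  by (simp_all add: VV_def ops_lin ops_gen)

lemma P_E: "Ep q (PP a k) = PP a k" "Em q (PP a k) = PP a k"
  by (induction k) (simp_all add: ops_gen Ep_mul Em_mul VV_ops)

lemma tpow_add: "tmul (tpow f m) (tpow f n) = tpow f (m + n)"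
  by (induction m) (simp_all add: tmul_assoc)

lemma A_Suc: "Xop q (PP a (Suc k)) = tadd (tmul (VV a) (Xop q (PP a k))) (tsmul (- (q + inverse q)) (tmul gu (PP a k)))"
  by (simp add: X_mul VV_ops P_E tmul_tsmul_l)
lemma B_Suc: "Yop q (PP a (Suc k)) = tadd (tmul (VV a) (Yop q (PP a k))) (tsmul (q + inverse q) (tmul gw (PP a k)))"
  by (simp add: Y_mul VV_ops P_E tmul_tsmul_l)

lemma ops_zero[simp]: "Ep q tzero = tzero" "Em q tzero = tzero" "Xop q tzero = tzero" "Yop q tzero = tzero"
  by (simp_all add: Ep_def Em_def Xop_def Yop_def)

lemma A_E: "Ep q (Xop q (PP a k)) = tsmul q (Xop q (PP a k))"
proof (induction k)
  case 0 then show ?case by (simp add: ops_gen)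
next
  case (Suc k)
  show ?case unfolding A_Suc
    by (simp add: ops_gen ops_lin Ep_mul VV_ops P_E tsimps Suc del: tpow.simps,
      simp add: fun_eq_iff tadd_def tsmul_def algebra_simps)
qed
lemma B_E: "Ep q (Yop q (PP a k)) = tsmul (inverse q) (Yop q (PP a k))"
proof (induction k)
  case 0 then show ?case by (simp add: ops_gen)
next
  case (Suc k)
  show ?case unfolding B_Suc
    by (simp add: ops_gen ops_lin Ep_mul VV_ops P_E tsimps Suc del: tpow.simps,
      simp add: fun_eq_iff tadd_def tsmul_def algebra_simps)
qed

lemma K_P: "Kop q (PP a k) = tsmul (q/2) (tadd (Xop q (Yop q (PP a k))) (Yop q (Xop q (PP a k))))"
  unfolding Kop_def P_E by (simp add: fun_eq_iff tadd_def tsub_def tsmul_def tzero_def)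

lemma K_Suc:
  assumes q0: "q \<noteq> 0"
  shows "Kop q (PP a (Suc k)) = tadd (tmul (VV a) (Kop q (PP a k)))
     (tsmul (q * (q + inverse q)) (tadd (tadd (tsmul (- inverse q) (tmul gu (Yop q (PP a k))))
         (tsmul q (tmul gw (Xop q (PP a k))))) (tmul gv (PP a k))))"
proof -
  have "Kop q (PP a (Suc k)) = tsmul (q/2) (tadd (Xop q (Yop q (PP a (Suc k)))) (Yop q (Xop q (PP a (Suc k)))))"
    by (rule K_P)
  also have "\<dots> = tadd (tmul (VV a) (Kop q (PP a k)))
     (tsmul (q * (q + inverse q)) (tadd (tadd (tsmul (- inverse q) (tmul gu (Yop q (PP a k))))
         (tsmul q (tmul gw (Xop q (PP a k))))) (tmul gv (PP a k))))"
    unfolding A_Suc B_Suc K_P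
    by (simp add: ops_lin X_mul Y_mul VV_ops P_E A_E B_E ops_gen tsimps del: tpow.simps,
        simp add: fun_eq_iff tadd_def tsmul_def algebra_simps)
  finally show ?thesis .
qed



locale qsetup =
  fixes q h c a :: complex
  assumes q0: "q \<noteq> 0" and q1: "q^2 \<noteq> 1" and q2: "q^2 \<noteq> -1" and ha: "h = a * (1 - q^2)"
begin

lemma rel_uV: "eqA q h c (tmul (VV a) gu) (tsmul (q^2) (tmul gu (VV a)))"
proof -
  let ?r = "tadd (tsub (tsmul (q^2) (tmul gu gv)) (tmul gv gu)) (tsmul h gu)"
  have "?r \<in> relideal q h c" by (rule I_rel) (simp add: rels_def)
  then have "tsmul (-1) ?r \<in> relideal q h c" by (rule I_tsmul)
  moreover have "tsmul (-1) ?r = tsub (tmul (VV a) gu) (tsmul (q^2) (tmul gu (VV a)))"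
    unfolding VV_def by (simp add: tsimps, simp add: fun_eq_iff tadd_def tsub_def tsmul_def ha algebra_simps)
  ultimately show ?thesis unfolding eqA_def by simp
qed

lemma rel_Vw: "eqA q h c (tmul gw (VV a)) (tsmul (q^2) (tmul (VV a) gw))"
proof -
  let ?r = "tsub (tadd (tsmul (- (q^2)) (tmul gv gw)) (tmul gw gv)) (tsmul h gw)"
  have "?r \<in> relideal q h c" by (rule I_rel) (simp add: rels_def)
  moreover have "?r = tsub (tmul gw (VV a)) (tsmul (q^2) (tmul (VV a) gw))"
    unfolding VV_def by (simp add: tsimps, simp add: fun_eq_iff tadd_def tsub_def tsmul_def ha algebra_simps)
  ultimately show ?thesis unfolding eqA_def by simp
qed

definition ss :: "nat \<Rightarrow> complex" where "ss n = (q^(2*n) - 1) / (q^2 - 1)"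
definition tt :: "nat \<Rightarrow> complex" where "tt n = q^2 * (q^(2*n) - 1) / ((q^2 - 1) * q^(2*n))"

lemma pow_Suc2: "q^(2*Suc n) = q^2 * q^(2*n)"
  by (simp add: power_add[symmetric])
lemma q1': "q^2 - 1 \<noteq> 0" using q1 by simp
lemma ss_Suc: "ss (Suc n) = q^2 * ss n + 1"
  unfolding ss_def pow_Suc2 using q1' by (simp add: field_simps)
lemma tt_Suc: "tt (Suc n) = tt n / q^2 + 1"
proof -
  have gen0: "x \<noteq> 0 \<Longrightarrow> y \<noteq> 0 \<Longrightarrow> y - 1 \<noteq> 0 \<Longrightarrow> y * (y * x - 1) / ((y - 1) * (y * x)) = (y * (x - 1) / ((y - 1) * x)) / y + 1" for x y :: complex
    by (simp add: field_simps)
  have gen: "x \<noteq> 0 \<Longrightarrow> q^2 * (q^2 * x - 1) / ((q^2 - 1) * (q^2 * x)) = (q^2 * (x - 1) / ((q^2 - 1) * x)) / q^2 + 1" for x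
    using q1' q0 by (intro gen0) auto
  have "q^(2*n) \<noteq> 0" using q0 by simp
  then show ?thesis unfolding tt_def pow_Suc2 by (rule gen)
qed
lemma ss_1: "ss (Suc 0) = 1" using q1' unfolding ss_def by simp
lemma tt_1: "tt (Suc 0) = 1" using q1' q0 unfolding tt_def by simp

lemma A_cong: "eqA q h c (Xop q (PP a (Suc k))) (tsmul (- (q + inverse q) * ss (Suc k)) (tmul gu (PP a k)))"
proof (induction k)
  case 0
  show ?case unfolding A_Suc
    by (rule eqA_eq) (simp add: ops_gen ss_1)
next
  case (Suc k)
  let ?x = "- (q + inverse q)"
  have "eqA q h c (Xop q (PP a (Suc (Suc k))))
      (tadd (tmul (VV a) (tsmul (?x * ss (Suc k)) (tmul gu (PP a k)))) (tsmul ?x (tmul gu (PP a (Suc k)))))"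
    unfolding A_Suc[of q a "Suc k"]
    by (intro eqA_tadd eqA_lmul Suc eqA_eq refl) simp
  also have "(tadd (tmul (VV a) (tsmul (?x * ss (Suc k)) (tmul gu (PP a k)))) (tsmul ?x (tmul gu (PP a (Suc k)))))
     = tadd (tsmul (?x * ss (Suc k)) (tmul (tmul (VV a) gu) (PP a k))) (tsmul ?x (tmul gu (PP a (Suc k))))"
    by (simp add: tsimps del: tpow.simps)
  finally have 1: "eqA q h c (Xop q (PP a (Suc (Suc k)))) \<dots>" .
  have 2: "eqA q h c (tadd (tsmul (?x * ss (Suc k)) (tmul (tmul (VV a) gu) (PP a k))) (tsmul ?x (tmul gu (PP a (Suc k)))))
      (tadd (tsmul (?x * ss (Suc k)) (tmul (tsmul (q^2) (tmul gu (VV a))) (PP a k))) (tsmul ?x (tmul gu (PP a (Suc k)))))"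
    by (intro eqA_tadd eqA_tsmul eqA_rmul rel_uV eqA_eq refl) simp
  have 3: "tadd (tsmul (?x * ss (Suc k)) (tmul (tsmul (q^2) (tmul gu (VV a))) (PP a k))) (tsmul ?x (tmul gu (PP a (Suc k))))
     = tsmul (?x * ss (Suc (Suc k))) (tmul gu (PP a (Suc k)))"
    unfolding ss_Suc[of "Suc k"] by (simp add: tsimps, simp add: fun_eq_iff tadd_def tsmul_def algebra_simps)
  show ?case using eqA_trans[OF 1 2] 3 by simp
qed

lemma B_cong: "eqA q h c (Yop q (PP a (Suc k))) (tsmul ((q + inverse q) * tt (Suc k)) (tmul gw (PP a k)))"
proof (induction k)
  case 0
  show ?case unfolding B_Suc
    by (rule eqA_eq) (simp add: ops_gen tt_1)
next
  case (Suc k)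
  let ?x = "q + inverse q"
  have "eqA q h c (Yop q (PP a (Suc (Suc k))))
      (tadd (tmul (VV a) (tsmul (?x * tt (Suc k)) (tmul gw (PP a k)))) (tsmul ?x (tmul gw (PP a (Suc k)))))"
    unfolding B_Suc[of q a "Suc k"]
    by (intro eqA_tadd eqA_lmul Suc eqA_eq refl) simp
  also have "(tadd (tmul (VV a) (tsmul (?x * tt (Suc k)) (tmul gw (PP a k)))) (tsmul ?x (tmul gw (PP a (Suc k)))))
     = tadd (tsmul (?x * tt (Suc k)) (tmul (tmul (VV a) gw) (PP a k))) (tsmul ?x (tmul gw (PP a (Suc k))))"
    by (simp add: tsimps del: tpow.simps)
  finally have 1: "eqA q h c (Yop q (PP a (Suc (Suc k)))) \<dots>" .
  have 2: "eqA q h c (tadd (tsmul (?x * tt (Suc k)) (tmul (tmul (VV a) gw) (PP a k))) (tsmul ?x (tmul gw (PP a (Suc k)))))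
      (tadd (tsmul (?x * tt (Suc k)) (tmul (tsmul (inverse (q^2))  (tmul gw (VV a))) (PP a k))) (tsmul ?x (tmul gw (PP a (Suc k)))))"
  proof -
    have inv: "tsmul (inverse (q^2)) (tsmul (q^2) f) = f" for f
      using q0 by (simp add: tsmul_def fun_eq_iff)
    have "eqA q h c (tmul (VV a) gw) (tsmul (inverse (q^2)) (tmul gw (VV a)))"
      using eqA_sym[OF eqA_tsmul[OF rel_Vw, of "inverse (q^2)"]] unfolding inv .
    then show ?thesis by (intro eqA_tadd eqA_tsmul eqA_rmul eqA_eq[OF refl]) simp_all
  qed
  have 3: "tadd (tsmul (?x * tt (Suc k)) (tmul (tsmul (inverse (q^2)) (tmul gw (VV a))) (PP a k))) (tsmul ?x (tmul gw (PP a (Suc k))))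
     = tsmul (?x * tt (Suc (Suc k))) (tmul gw (PP a (Suc k)))"
    unfolding tt_Suc[of "Suc k"] by (simp add: tsimps, simp add: fun_eq_iff tadd_def tsmul_def algebra_simps divide_inverse)
  show ?case using eqA_trans[OF 1 2] 3 by simp
qed


lemma p0: "q^2 + 1 \<noteq> 0" proof
  assume "q^2 + 1 = 0"
  then have "q^2 = -1" by (simp add: eq_neg_iff_add_eq_0)
  then show False using q2 by simp
qed
lemma hinv: "q * inverse q = 1" "(q^2+1) * inverse (q^2+1) = 1" "(q^2-1) * inverse (q^2-1) = 1"
  using q0 p0 q1 by auto

definition om2 where "om2 = - (q^4) / (q^2+1)^2"
definition om1 where "om1 = - (q^2 * a) / (q^2+1)"
definition om0 where "om0 = q^2 * (c - a^2) / (q^2+1)^2"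
definition mu2 where "mu2 = om2 - (1 - q^2) / (q^2+1)"
definition mu1 where "mu1 = om1 - a * (1 - q^2) / (q^2+1)"

lemma PP2: "PP a 2 = tmul (VV a) (VV a)" by (simp add: numeral_2_eq_2)

lemma wu_rel: "eqA q h c (tmul gw gu) (tadd (tadd (tsmul om2 (PP a 2)) (tsmul om1 (VV a))) (tsmul om0 tone))"
  and uw_rel: "eqA q h c (tmul gu gw) (tadd (tadd (tsmul mu2 (PP a 2)) (tsmul mu1 (VV a))) (tsmul om0 tone))"
proof -
  let ?p = "q^2 + 1"
  let ?r1 = "tsub (tadd (tadd (tsmul (q^2 + 1) (tmul gu gw)) (tmul gv gv))
                (tsmul ((q^2 + 1) / q^2) (tmul gw gu))) (tsmul c tone)"
  let ?r3 = "tsub (tadd (tsmul (q^2 + 1) (tsub (tmul gu gw) (tmul gw gu))) (tsmul (1 - q^2) (tmul gv gv)))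
          (tsmul h gv)"
  have r1: "?r1 \<in> relideal q h c" by (rule I_rel) (simp add: rels_def)
  have r3: "?r3 \<in> relideal q h c" by (rule I_rel) (simp add: rels_def)
  have e0: "tsub ?r1 ?r3 = tadd ?r1 (tsmul (-1) ?r3)" by (simp only: fun_eq_iff tsub_def tadd_def tsmul_def) simp
  have i1: "tsmul (q^2/?p^2) (tsub ?r1 ?r3) \<in> relideal q h c"
    unfolding e0 by (intro I_tsmul I_tadd r1 r3)
  have e1: "tsmul (q^2/?p^2) (tsub ?r1 ?r3) = tsub (tmul gw gu) (tadd (tadd (tsmul om2 (PP a 2)) (tsmul om1 (VV a))) (tsmul om0 tone))"
    unfolding PP2 unfolding VV_def om2_def om1_def om0_def
    apply (simp add: tsimps)
    apply (simp add: fun_eq_iff tadd_def tsub_def tsmul_def ha)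
    apply (unfold divide_inverse power_inverse[symmetric])
    apply (intro allI)
    using hinv by algebra
  show "eqA q h c (tmul gw gu) (tadd (tadd (tsmul om2 (PP a 2)) (tsmul om1 (VV a))) (tsmul om0 tone))"
    using i1 unfolding e1 eqA_def .
  have i2: "tadd (tsmul (q^2/?p^2) (tsub ?r1 ?r3)) (tsmul (1/?p) ?r3) \<in> relideal q h c"
    by (intro I_tadd I_tsmul i1 r3)
  have e2: "tadd (tsmul (q^2/?p^2) (tsub ?r1 ?r3)) (tsmul (1/?p) ?r3) = tsub (tmul gu gw) (tadd (tadd (tsmul mu2 (PP a 2)) (tsmul mu1 (VV a))) (tsmul om0 tone))"
    unfolding PP2 unfolding VV_def mu2_def mu1_def om2_def om1_def om0_def
    apply (simp add: tsimps)
    apply (simp add: fun_eq_iff tadd_def tsub_def tsmul_def ha)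
    apply (unfold divide_inverse power_inverse[symmetric])
    apply (intro allI)
    using hinv by algebra
  show "eqA q h c (tmul gu gw) (tadd (tadd (tsmul mu2 (PP a 2)) (tsmul mu1 (VV a))) (tsmul om0 tone))"
    using i2 unfolding e2 eqA_def .
qed

lemma PP_Suc2: "tmul (PP a 2) (PP a k) = PP a (Suc (Suc k))"
  using tpow_add[of "VV a" 2 k] by simp

lemma wu_P: "eqA q h c (tmul gw (tmul gu (PP a k)))
   (tadd (tadd (tsmul om2 (PP a (Suc (Suc k)))) (tsmul om1 (PP a (Suc k)))) (tsmul om0 (PP a k)))"
proof -
  have "eqA q h c (tmul (tmul gw gu) (PP a k)) (tmul (tadd (tadd (tsmul om2 (PP a 2)) (tsmul om1 (VV a))) (tsmul om0 tone)) (PP a k))"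
    by (rule eqA_rmul[OF fs_tpow[OF fs_VV] wu_rel])
  moreover have "tmul (tadd (tadd (tsmul om2 (PP a 2)) (tsmul om1 (VV a))) (tsmul om0 tone)) (PP a k)
     = tadd (tadd (tsmul om2 (PP a (Suc (Suc k)))) (tsmul om1 (PP a (Suc k)))) (tsmul om0 (PP a k))"
    by (simp add: tmul_tadd_l tmul_tsmul_l PP_Suc2)
  ultimately show ?thesis by (simp add: tmul_assoc)
qed

lemma uw_P: "eqA q h c (tmul gu (tmul gw (PP a k)))
   (tadd (tadd (tsmul mu2 (PP a (Suc (Suc k)))) (tsmul mu1 (PP a (Suc k)))) (tsmul om0 (PP a k)))"
proof -
  have "eqA q h c (tmul (tmul gu gw) (PP a k)) (tmul (tadd (tadd (tsmul mu2 (PP a 2)) (tsmul mu1 (VV a))) (tsmul om0 tone)) (PP a k))"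
    by (rule eqA_rmul[OF fs_tpow[OF fs_VV] uw_rel])
  moreover have "tmul (tadd (tadd (tsmul mu2 (PP a 2)) (tsmul mu1 (VV a))) (tsmul om0 tone)) (PP a k)
     = tadd (tadd (tsmul mu2 (PP a (Suc (Suc k)))) (tsmul mu1 (PP a (Suc k)))) (tsmul om0 (PP a k))"
    by (simp add: tmul_tadd_l tmul_tsmul_l PP_Suc2)
  ultimately show ?thesis by (simp add: tmul_assoc)
qed

lemma uB: "eqA q h c (tmul gu (Yop q (PP a (Suc k))))
   (tsmul ((q + inverse q) * tt (Suc k)) (tadd (tadd (tsmul mu2 (PP a (Suc (Suc k)))) (tsmul mu1 (PP a (Suc k)))) (tsmul om0 (PP a k))))"
proof -
  have "eqA q h c (tmul gu (Yop q (PP a (Suc k)))) (tmul gu (tsmul ((q + inverse q) * tt (Suc k)) (tmul gw (PP a k))))"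
    by (rule eqA_lmul[OF fs_gens(1) B_cong])
  then have 1: "eqA q h c (tmul gu (Yop q (PP a (Suc k)))) (tsmul ((q + inverse q) * tt (Suc k)) (tmul gu (tmul gw (PP a k))))"
    by (simp add: tmul_tsmul_r)
  show ?thesis by (rule eqA_trans[OF 1 eqA_tsmul[OF uw_P]])
qed

lemma wA: "eqA q h c (tmul gw (Xop q (PP a (Suc k))))
   (tsmul (- (q + inverse q) * ss (Suc k)) (tadd (tadd (tsmul om2 (PP a (Suc (Suc k)))) (tsmul om1 (PP a (Suc k)))) (tsmul om0 (PP a k))))"
proof -
  have "eqA q h c (tmul gw (Xop q (PP a (Suc k)))) (tmul gw (tsmul (- (q + inverse q) * ss (Suc k)) (tmul gu (PP a k))))"
    by (rule eqA_lmul[OF fs_gens(3) A_cong])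
  then have 1: "eqA q h c (tmul gw (Xop q (PP a (Suc k)))) (tsmul (- (q + inverse q) * ss (Suc k)) (tmul gw (tmul gu (PP a k))))"
    by (simp add: tmul_tsmul_r)
  show ?thesis by (rule eqA_trans[OF 1 eqA_tsmul[OF wu_P]])
qed

end


context qsetup begin

definition C0 :: "nat \<Rightarrow> complex" where "C0 k = (q^(2*(k+1)) - 1) / (q^2 - 1)"
definition C1 :: "nat \<Rightarrow> complex" where "C1 k = a * (q^2 + 1) * (q^(2*k) - 1) / (q^2 - 1)"
definition C2 :: "nat \<Rightarrow> complex" where "C2 k = - ((c - a^2) * q^2 * (q^(2*(k-1)) - 1) / (q^2 - 1))"

definition QQ :: "nat \<Rightarrow> tens" where
  "QQ k = tadd (tadd (tsmul (tt k * C0 k) (PP a k)) (tsmul (tt k * C1 k) (PP a (k-1)))) (tsmul (tt k * C2 k) (PP a (k-2)))"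

lemma C2_1: "C2 (Suc 0) = 0" by (simp add: C2_def)

lemma VQ: "tmul (VV a) (QQ (Suc m)) = tadd (tadd (tsmul (tt (Suc m) * C0 (Suc m)) (PP a (Suc (Suc m))))
    (tsmul (tt (Suc m) * C1 (Suc m)) (PP a (Suc m)))) (tsmul (tt (Suc m) * C2 (Suc m)) (PP a m))"
proof (cases m)
  case 0
  then show ?thesis by (simp add: QQ_def C2_1 tsimps del: tpow.simps, simp add: fun_eq_iff tsmul_def tadd_def)
next
  case (Suc n)
  then show ?thesis by (simp add: QQ_def tsimps del: tpow.simps, simp)
qed

lemma gvP: "tmul gv (PP a k) = tadd (PP a (Suc k)) (tsmul a (PP a k))"
  by (simp add: VV_def tsimps, simp add: fun_eq_iff tadd_def tsub_def tsmul_def)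

lemma KP0: "Kop q (PP a 0) = tzero"
  using K_P[of q a 0] by (simp add: ops_gen)

lemma main: "eqA q h c (Kop q (PP a (Suc m))) (QQ (Suc m))"
proof (induction m)
  case 0
  show ?case
    unfolding K_Suc[OF q0, of a 0] KP0
    apply (rule eqA_eq)
    apply (simp add: ops_gen QQ_def C2_1 VV_def tsimps)
    apply (simp add: fun_eq_iff tadd_def tsub_def tsmul_def tt_1 C0_def C1_def q1 q0)
    apply (unfold divide_inverse power_inverse[symmetric])
    apply (intro allI)
    using hinv by algebra
next
  case (Suc m)
  let ?y = "q + inverse q"
  have 1: "eqA q h c (Kop q (PP a (Suc (Suc m))))
     (tadd (tmul (VV a) (QQ (Suc m)))
     (tsmul (q * ?y) (tadd (tadd (tsmul (- inverse q)
        (tsmul (?y * tt (Suc m)) (tadd (tadd (tsmul mu2 (PP a (Suc (Suc m)))) (tsmul mu1 (PP a (Suc m)))) (tsmul om0 (PP a m)))))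
         (tsmul q (tsmul (- ?y * ss (Suc m)) (tadd (tadd (tsmul om2 (PP a (Suc (Suc m)))) (tsmul om1 (PP a (Suc m)))) (tsmul om0 (PP a m))))))
         (tmul gv (PP a (Suc m))))))"
    unfolding K_Suc[OF q0, of a "Suc m"]
    by (intro eqA_tadd eqA_lmul eqA_tsmul Suc uB wA eqA_eq[OF refl] fs_VV)
  have 2: "(tadd (tmul (VV a) (QQ (Suc m)))
     (tsmul (q * ?y) (tadd (tadd (tsmul (- inverse q)
        (tsmul (?y * tt (Suc m)) (tadd (tadd (tsmul mu2 (PP a (Suc (Suc m)))) (tsmul mu1 (PP a (Suc m)))) (tsmul om0 (PP a m)))))
         (tsmul q (tsmul (- ?y * ss (Suc m)) (tadd (tadd (tsmul om2 (PP a (Suc (Suc m)))) (tsmul om1 (PP a (Suc m)))) (tsmul om0 (PP a m))))))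
         (tmul gv (PP a (Suc m)))))) = QQ (Suc (Suc m))"
    unfolding VQ gvP
    apply (simp add: QQ_def del: tpow.simps)
    apply (simp add: fun_eq_iff tadd_def tsmul_def del: tpow.simps)
    apply (intro allI)
    apply (simp add: tt_def ss_def C0_def C1_def C2_def mu2_def mu1_def om2_def om1_def om0_def del: tpow.simps)
    apply (unfold divide_inverse power_inverse[symmetric] inverse_mult_distrib)
    subgoal for x
    proof -
      have hX: "q^(2*m) * (inverse q)^(2*m) = 1"
        using q0 by (simp add: power_mult_distrib[symmetric])
      define X where "X = q^(2*m)"
      define iX where "iX = (inverse q)^(2*m)"
      have hX': "X * iX = 1" using hX by (simp add: X_def iX_def)
      show ?thesis unfolding X_def[symmetric] iX_def[symmetric] using hinv hX' by algebra
    qed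
    done
  show ?case using 1 2 by simp
qed

end

theorem proposition1:
  fixes q h c :: complex and k :: nat
  assumes "q \<noteq> 0"
    and "\<forall>n::nat. n > 0 \<longrightarrow> q ^ n \<noteq> 1"
  defines "a \<equiv> h / (1 - q^2)"
  defines "ct \<equiv> c - a^2"
  defines "vt \<equiv> tsub gv (tsmul a tone)"
  shows "eqA q h c (Kop q (tpow vt k))
     (tsmul (q * betaq k q)
        (tadd (tadd
           (tsmul ((q^(2*(k+1)) - 1) / (q^2 - 1)) (tpowm vt k 0))
           (tsmul (a * (q^2 + 1) * (q^(2*k) - 1) / (q^2 - 1)) (tpowm vt k 1)))
           (tsmul (- (ct * q^2 * (q^(2*(k-1)) - 1) / (q^2 - 1))) (tpowm vt k 2))))"
proof -
  have q0: "q \<noteq> 0" by fact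
  have q1: "q^2 \<noteq> 1" using assms(2) by auto
  have q4: "q^4 \<noteq> 1" using assms(2) by auto
  have q2: "q^2 \<noteq> -1"
  proof
    assume "q^2 = -1"
    moreover have "q^4 = (q^2)^2" by (simp flip: power_mult)
    ultimately have "q^4 = 1" by simp
    then show False using q4 by simp
  qed
  have q1': "1 - q^2 \<noteq> 0" using q1 by simp
  have ha: "h = a * (1 - q^2)" unfolding a_def using q1' by simp
  interpret qsetup q h c a by (unfold_locales) (fact q0 q1 q2 ha)+
  have vt: "vt = VV a" by (simp add: vt_def VV_def)
  show ?thesis
  proof (cases k)
    case 0
    have "betaq 0 q = 0" by (simp add: betaq_def)
    then show ?thesis unfolding 0 vt using KP0
      by (intro eqA_eq) (simp add: fun_eq_iff tsmul_def tzero_def)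
  next
    case (Suc m)
    have bt: "q * betaq (Suc m) q = tt (Suc m)"
    proof -
      have i: "2 * int (Suc m) - 1 = int (Suc (2 * m))" by simp
      have e: "q powi (2 * int (Suc m) - 1) = q^(Suc (2*m))"
        unfolding i by (rule power_int_of_nat)
      have e2: "q^(2 * Suc m) = q * q^(Suc (2*m))" by simp
      have nz: "q^(Suc (2*m)) \<noteq> 0" using q0 by simp
      have q1'': "q^2 - 1 \<noteq> 0" using q1 by simp
      have gen: "Y \<noteq> 0 \<Longrightarrow> q * ((q * Y - 1) / (Y * (q^2 - 1))) = q^2 * (q * Y - 1) / ((q^2 - 1) * (q * Y))" for Y
        using q0 q1'' by (simp add: field_simps, algebra)
      show ?thesis unfolding betaq_def tt_def e e2 using nz by (rule gen)
    qed
    have eq: "QQ (Suc m) = tsmul (q * betaq (Suc m) q)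
        (tadd (tadd
           (tsmul ((q^(2*(Suc m+1)) - 1) / (q^2 - 1)) (tpowm vt (Suc m) 0))
           (tsmul (a * (q^2 + 1) * (q^(2*Suc m) - 1) / (q^2 - 1)) (tpowm vt (Suc m) 1)))
           (tsmul (- (ct * q^2 * (q^(2*(Suc m-1)) - 1) / (q^2 - 1))) (tpowm vt (Suc m) 2)))"
    proof (cases m)
      case 0
      then show ?thesis unfolding bt vt
        by (simp add: QQ_def tpowm_def C0_def C1_def C2_def fun_eq_iff tadd_def tsmul_def tzero_def
            algebra_simps del: tpow.simps)
    next
      case (Suc n)
      then show ?thesis unfolding bt vt
        by (simp add: QQ_def tpowm_def C0_def C1_def C2_def ct_def fun_eq_iff tadd_def tsmul_def
            algebra_simps del: tpow.simps)
    qed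
    show ?thesis unfolding Suc using main[of m] eq vt by simp
  qed
qed

end
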